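(* Consider conditional probability table (CPT) Bayesian networks on $m$ nodes as described in the context, for an ensemble $\mathcal{G}$ of DAGs on $[m]$ and parameter maps $\mathcal{P}(\mathcal{G})$, and suppose $\theta_{\min}>0$. Then $$\Delta_{\max}:=\max_{i\in[m]}\max_{G\in\mathcal{G}}\sup_{\Theta\in\mathcal{P}(\mathcal{G})}\mathbb{E}_{X_{\pi_i(G)}}[\Delta(\eta_i,\eta_0)]\le 4\log(1/\theta_{\min}),\qquad \sup_{\Theta\in\mathcal{P}(\mathcal{G})}I(S;G\mid\Theta)\le 4nm\log(1/\theta_{\min}).$$
   Context: Each $X_i$ takes values in $[v]$. Given a DAG $G$ and parameter map $\Theta$, node $i$ has a conditional probability table $\Theta_i^G:[v]^{|\pi_i(G)|}\to\Delta_v$ (the probability simplex), and $P(X_i=j\mid X_{\pi_i(G)}=x)=\theta^G_{ij}(x)$; the reference distribution $P_i(\varnothing,\Theta)$ is the table the parameter map assigns to node $i$ when it has no parents. The joint distribution is $\prod_iP_i(x_i\mid x_{\pi_i(G)})$; $S$ is $n$ i.i.d. samples from it; $I(S;G\mid\Theta)$ is the mutual information between $S$ and $G$ with $G$ uniform on $\mathcal{G}$ and $\Theta$ fixed. Viewing the categorical distribution as an exponential family with sufficient statistic $T(x)=(\mathbf{1}[x=j])_{j=1}^v$ and natural parameter $(\log\theta_j)_{j=1}^v$, $\eta_i=(\log\theta^G_{ij}(X_{\pi_i(G)}))_j$ and $\eta_0$ is the natural parameter of $P_i(\varnothing,\Theta)$; $\Delta(\eta_1,\eta_2)=(\eta_1-\eta_2)^T(\tau(\eta_1)-\tau(\eta_2))$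 where $\tau$ is the expected sufficient statistic (the probability vector). $\mathbb{E}_{X_{\pi_i(G)}}$ is expectation over the parents' values under the network's distribution. $\theta_{\min}:=\inf_{\Theta}\min_{G}\min_{i}\min_{x}\min_{j}\theta^G_{ij}(x)$, the minimum probability entry over all tables used, including the parentless tables $P_i(\varnothing,\Theta)$. *)

theory Defs
  imports Complex_Main "HOL-Library.FuncSet"
begin

text \<open>Nodes are 0..<m, values are 0..<v. A DAG is represented by its parent
function G :: nat => nat set (G i = parents of node i; G i = {} for i >= m).
A parameter map Theta assigns to node i, parent set S and parent assignment x
the conditional probability Theta i S x j of X_i = j. The assignment x is passed
restricted to S (zero elsewhere). The reference (parentless) table of node i is
Theta i {} (\<lambda>_. 0).\<close>

type_synonym dag = "nat \<Rightarrow> nat set"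
type_synonym param_map = "nat \<Rightarrow> nat set \<Rightarrow> (nat \<Rightarrow> nat) \<Rightarrow> nat \<Rightarrow> real"

definition is_dag :: "nat \<Rightarrow> dag \<Rightarrow> bool" where
  "is_dag m G \<longleftrightarrow> (\<forall>i. (i < m \<longrightarrow> G i \<subseteq> {..<m}) \<and> (m \<le> i \<longrightarrow> G i = {}))
      \<and> acyclic {(j, i). i < m \<and> j \<in> G i}"

definition configs :: "nat \<Rightarrow> nat \<Rightarrow> (nat \<Rightarrow> nat) set" where
  "configs m v = Pi\<^sub>E {..<m} (\<lambda>_. {..<v})"

definition restr :: "nat set \<Rightarrow> (nat \<Rightarrow> nat) \<Rightarrow> nat \<Rightarrow> nat" where
  "restr S x = (\<lambda>k. if k \<in> S then x k else 0)"

definition is_dist :: "nat \<Rightarrow> (nat \<Rightarrow> real) \<Rightarrow> bool" where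
  "is_dist v p \<longleftrightarrow> (\<forall>j<v. 0 \<le> p j) \<and> (\<Sum>j<v. p j) = 1"

definition ref_table :: "param_map \<Rightarrow> nat \<Rightarrow> nat \<Rightarrow> real" where
  "ref_table \<Theta> i = \<Theta> i {} (\<lambda>_. 0)"

definition cpd :: "param_map \<Rightarrow> dag \<Rightarrow> nat \<Rightarrow> (nat \<Rightarrow> nat) \<Rightarrow> nat \<Rightarrow> real" where
  "cpd \<Theta> G i x = \<Theta> i (G i) (restr (G i) x)"

definition valid_param :: "nat \<Rightarrow> nat \<Rightarrow> dag set \<Rightarrow> param_map \<Rightarrow> bool" where
  "valid_param m v Gs \<Theta> \<longleftrightarrow>
     (\<forall>i<m. is_dist v (ref_table \<Theta> i)) \<and>
     (\<forall>G\<in>Gs. \<forall>i<m. \<forall>x\<in>configs m v. is_dist v (cpd \<Theta> G i x))"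

definition joint :: "nat \<Rightarrow> param_map \<Rightarrow> dag \<Rightarrow> (nat \<Rightarrow> nat) \<Rightarrow> real" where
  "joint m \<Theta> G x = (\<Prod>i<m. cpd \<Theta> G i x (x i))"

text \<open>Delta(eta_1, eta_2) = (eta_1 - eta_2)^T (tau(eta_1) - tau(eta_2)) for the
categorical family: natural parameters (ln p_j)_j, mean parameters (p_j)_j.\<close>
definition delta :: "nat \<Rightarrow> (nat \<Rightarrow> real) \<Rightarrow> (nat \<Rightarrow> real) \<Rightarrow> real" where
  "delta v p q = (\<Sum>j<v. (ln (p j) - ln (q j)) * (p j - q j))"

text \<open>E_{X_{pi_i(G)}}[Delta(eta_i, eta_0)] under the network distribution of (G, Theta).\<close>
definition exp_delta :: "nat \<Rightarrow> nat \<Rightarrow> param_map \<Rightarrow> dag \<Rightarrow> nat \<Rightarrow> real" where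
  "exp_delta m v \<Theta> G i =
     (\<Sum>x\<in>configs m v. joint m \<Theta> G x * delta v (cpd \<Theta> G i x) (ref_table \<Theta> i))"

definition theta_min :: "nat \<Rightarrow> nat \<Rightarrow> dag set \<Rightarrow> param_map set \<Rightarrow> real" where
  "theta_min m v Gs Ps = Inf
     ({cpd \<Theta> G i x j | \<Theta> G i x j. \<Theta> \<in> Ps \<and> G \<in> Gs \<and> i < m \<and> x \<in> configs m v \<and> j < v}
      \<union> {ref_table \<Theta> i j | \<Theta> i j. \<Theta> \<in> Ps \<and> i < m \<and> j < v})"

definition samples :: "nat \<Rightarrow> nat \<Rightarrow> nat \<Rightarrow> (nat \<Rightarrow> nat \<Rightarrow> nat) set" where
  "samples m v n = Pi\<^sub>E {..<n} (\<lambda>_. configs m v)"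

definition sample_prob :: "nat \<Rightarrow> nat \<Rightarrow> param_map \<Rightarrow> dag \<Rightarrow> (nat \<Rightarrow> nat \<Rightarrow> nat) \<Rightarrow> real" where
  "sample_prob m n \<Theta> G s = (\<Prod>t<n. joint m \<Theta> G (s t))"

text \<open>I(S; G | Theta) with G uniform on Gs and S = n i.i.d. samples (natural log,
convention 0 ln 0 = 0).\<close>
definition mutual_info :: "nat \<Rightarrow> nat \<Rightarrow> nat \<Rightarrow> dag set \<Rightarrow> param_map \<Rightarrow> real" where
  "mutual_info m v n Gs \<Theta> =
     (\<Sum>G\<in>Gs. \<Sum>s\<in>samples m v n.
        (let p = sample_prob m n \<Theta> G s;
             q = (\<Sum>G'\<in>Gs. sample_prob m n \<Theta> G' s) / real (card Gs)
         in (1 / real (card Gs)) * (if p = 0 then 0 else p * ln (p / q))))"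

end

theory Submission
  imports Defs
begin

lemma sum_PiE_insert:
  fixes f :: "(nat \<Rightarrow> nat) \<Rightarrow> real"
  assumes "k \<notin> M" "finite M" "finite V"
  shows "(\<Sum>x\<in>PiE (insert k M) (\<lambda>_. V). f x) = (\<Sum>y\<in>PiE M (\<lambda>_. V). \<Sum>j\<in>V. f (y(k:=j)))"
proof -
  have inj: "inj_on (\<lambda>(y, g). g(k := y)) (V \<times> PiE M (\<lambda>_. V))"
  proof (rule inj_onI, clarify)
    fix a g b h assume g: "g \<in> PiE M (\<lambda>_. V)" and h: "h \<in> PiE M (\<lambda>_. V)" and e: "g(k := a) = h(k := b)"
    have "a = b" using fun_cong[OF e, of k] by simp
    moreover have "g = h"
    proof
      fix i show "g i = h i"
      proof (cases "i = k")
        case True thus ?thesis using g h assms(1) by (auto simp: PiE_def extensional_def)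
      next
        case False thus ?thesis using fun_cong[OF e, of i] by simp
      qed
    qed
    ultimately show "a = b \<and> g = h" by simp
  qed
  have "(\<Sum>x\<in>PiE (insert k M) (\<lambda>_. V). f x) = (\<Sum>p\<in>V \<times> PiE M (\<lambda>_. V). f ((\<lambda>(y, g). g(k := y)) p))"
    unfolding PiE_insert_eq by (rule sum.reindex[OF inj, unfolded comp_def])
  also have "\<dots> = (\<Sum>j\<in>V. \<Sum>y\<in>PiE M (\<lambda>_. V). f (y(k:=j)))"
    by (simp add: sum.cartesian_product split_def)
  also have "\<dots> = (\<Sum>y\<in>PiE M (\<lambda>_. V). \<Sum>j\<in>V. f (y(k:=j)))"
    by (rule sum.swap)
  finally show ?thesis .
qed

lemma cpd_upd: "k \<notin> G i \<Longrightarrow> cpd \<Theta> G i (y(k:=j)) = cpd \<Theta> G i y"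
  unfolding cpd_def restr_def by (auto intro!: arg_cong[where f="\<Theta> i (G i)"])

lemma joint_norm_gen:
  assumes sub: "\<forall>i<m. G i \<subseteq> {..<m}" and acyc: "acyclic {(j, i). i < m \<and> j \<in> G i}"
    and v: "v > 0" and dist: "\<forall>i<m. \<forall>x\<in>configs m v. is_dist v (cpd \<Theta> G i x)"
    and fin: "finite N"
  shows "N \<subseteq> {..<m} \<Longrightarrow> (\<forall>i\<in>N. G i \<subseteq> N) \<Longrightarrow>
     (\<Sum>x\<in>PiE N (\<lambda>_. {..<v}). \<Prod>i\<in>N. cpd \<Theta> G i x (x i)) = 1"
  using fin
proof (induction N rule: finite_psubset_induct)
  case (psubset N)
  show ?case
  proof (cases "N = {}")
    case True thus ?thesis by simp
  next
    case False
    let ?R = "{(j, i). i < m \<and> j \<in> G i}"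
    have "?R \<subseteq> {..<m} \<times> {..<m}" using sub by auto
    hence "finite ?R" by (rule finite_subset) auto
    hence wf: "wf (?R\<inverse>)" using acyc by (rule finite_acyclic_wf_converse)
    obtain k0 where "k0 \<in> N" using False by auto
    then obtain k where kN: "k \<in> N" and sink: "\<forall>y. (y, k) \<in> ?R\<inverse> \<longrightarrow> y \<notin> N"
      using wf unfolding wf_eq_minimal by metis
    have nk: "\<And>i. i \<in> N \<Longrightarrow> k \<notin> G i" using sink psubset.prems(1) by auto
    define M where "M = N - {k}"
    have N: "N = insert k M" "k \<notin> M" using kN M_def by auto
    have finM: "finite M" using psubset.hyps M_def by auto
    have IH: "(\<Sum>x\<in>PiE M (\<lambda>_. {..<v}). \<Prod>i\<in>M. cpd \<Theta> G i x (x i)) = 1"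
      apply (rule psubset.IH)
      using kN M_def psubset.prems nk by auto
    have inner: "(\<Sum>j<v. cpd \<Theta> G k y j) = 1" if y: "y \<in> PiE M (\<lambda>_. {..<v})" for y
    proof -
      define z where "z = (\<lambda>i. if i < m then (if i \<in> M then y i else 0) else undefined)"
      have z: "z \<in> configs m v" using y v unfolding z_def configs_def by (auto simp: PiE_def Pi_def extensional_def)
      have GkM: "G k \<subseteq> M" using psubset.prems(2) kN nk M_def by auto
      have "cpd \<Theta> G k y = cpd \<Theta> G k z"
        unfolding cpd_def restr_def z_def using GkM psubset.prems(1) M_def
        by (intro arg_cong[where f="\<Theta> k (G k)"] ext) auto
      moreover have "k < m" using kN psubset.prems(1) by auto
      ultimately show ?thesis using dist z unfolding is_dist_def by auto
    qed
    have "(\<Sum>x\<in>PiE N (\<lambda>_. {..<v}). \<Prod>i\<in>N. cpd \<Theta> G i x (x i))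
       = (\<Sum>y\<in>PiE M (\<lambda>_. {..<v}). \<Sum>j<v. \<Prod>i\<in>N. cpd \<Theta> G i (y(k:=j)) ((y(k:=j)) i))"
      unfolding N(1) using N(2) finM by (subst sum_PiE_insert) auto
    also have "\<dots> = (\<Sum>y\<in>PiE M (\<lambda>_. {..<v}). (\<Prod>i\<in>M. cpd \<Theta> G i y (y i)) * (\<Sum>j<v. cpd \<Theta> G k y j))"
    proof (rule sum.cong[OF refl])
      fix y assume "y \<in> PiE M (\<lambda>_. {..<v})"
      have "(\<Sum>j<v. \<Prod>i\<in>N. cpd \<Theta> G i (y(k:=j)) ((y(k:=j)) i))
          = (\<Sum>j<v. cpd \<Theta> G k y j * (\<Prod>i\<in>M. cpd \<Theta> G i y (y i)))"
      proof (rule sum.cong[OF refl])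
        fix j
        have "(\<Prod>i\<in>M. cpd \<Theta> G i (y(k:=j)) ((y(k:=j)) i)) = (\<Prod>i\<in>M. cpd \<Theta> G i y (y i))"
          using N nk by (intro prod.cong refl) (auto simp: cpd_upd)
        thus "(\<Prod>i\<in>N. cpd \<Theta> G i (y(k:=j)) ((y(k:=j)) i)) = cpd \<Theta> G k y j * (\<Prod>i\<in>M. cpd \<Theta> G i y (y i))"
          unfolding N(1) using N finM nk[OF kN] by (simp add: cpd_upd)
      qed
      thus "(\<Sum>j<v. \<Prod>i\<in>N. cpd \<Theta> G i (y(k:=j)) ((y(k:=j)) i))
          = (\<Prod>i\<in>M. cpd \<Theta> G i y (y i)) * (\<Sum>j<v. cpd \<Theta> G k y j)"
        by (simp add: sum_distrib_right mult.commute)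
    qed
    also have "\<dots> = 1" using IH inner by simp
    finally show ?thesis .
  qed
qed

lemma joint_norm:
  assumes "is_dag m G" "v > 0" "\<forall>i<m. \<forall>x\<in>configs m v. is_dist v (cpd \<Theta> G i x)"
  shows "(\<Sum>x\<in>configs m v. joint m \<Theta> G x) = 1"
  unfolding configs_def joint_def
  by (rule joint_norm_gen[where N="{..<m}"]) (use assms in \<open>auto simp: is_dag_def\<close>)


lemma delta_bound:
  assumes p: "is_dist v p" and q: "is_dist v q" and t: "t > 0"
    and lp: "\<forall>j<v. t \<le> p j" and lq: "\<forall>j<v. t \<le> q j"
  shows "delta v p q \<le> 2 * ln (1 / t)"
proof -
  have p1: "p j \<le> 1" if "j < v" for j
    using p that member_le_sum[of j "{..<v}" p] unfolding is_dist_def by auto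
  have q1: "q j \<le> 1" if "j < v" for j
    using q that member_le_sum[of j "{..<v}" q] unfolding is_dist_def by auto
  have L: "ln (1/t) = - ln t" using t by (simp add: ln_div)
  have trm: "(ln (p j) - ln (q j)) * (p j - q j) \<le> ln (1/t) * (p j + q j)" if j: "j < v" for j
  proof -
    have tp: "t \<le> p j" "t \<le> q j" using lp lq j by auto
    have a: "\<bar>ln (p j) - ln (q j)\<bar> \<le> ln (1/t)"
    proof -
      have "ln t \<le> ln (p j)" "ln t \<le> ln (q j)" using tp t by auto
      moreover have "ln (p j) \<le> 0" "ln (q j) \<le> 0" using p1 q1 j tp t by auto
      ultimately show ?thesis unfolding L by linarith
    qed
    have b: "\<bar>p j - q j\<bar> \<le> p j + q j" using tp t by linarith
    have "(ln (p j) - ln (q j)) * (p j - q j) \<le> \<bar>ln (p j) - ln (q j)\<bar> * \<bar>p j - q j\<bar>"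
      by (metis abs_ge_self abs_mult)
    also have "\<dots> \<le> ln (1/t) * (p j + q j)"
      by (rule mult_mono[OF a b]) (use a in auto)
    finally show ?thesis .
  qed
  have "delta v p q \<le> (\<Sum>j<v. ln (1/t) * (p j + q j))"
    unfolding delta_def by (rule sum_mono) (use trm in auto)
  also have "\<dots> = 2 * ln (1/t)" using p q unfolding is_dist_def
    by (simp add: sum_distrib_left[symmetric] sum.distrib)
  finally show ?thesis .
qed

theorem lemma7:
  fixes m v n :: nat and Gs :: "dag set" and Ps :: "param_map set"
  assumes "finite Gs" and "Gs \<noteq> {}" and "\<forall>G\<in>Gs. is_dag m G"
    and "Ps \<noteq> {}" and "\<forall>\<Theta>\<in>Ps. valid_param m v Gs \<Theta>"
    and "theta_min m v Gs Ps > 0"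
  shows "(\<forall>i<m. \<forall>G\<in>Gs. \<forall>\<Theta>\<in>Ps.
            exp_delta m v \<Theta> G i \<le> 4 * ln (1 / theta_min m v Gs Ps))
       \<and> (\<forall>\<Theta>\<in>Ps. mutual_info m v n Gs \<Theta> \<le> 4 * real n * real m * ln (1 / theta_min m v Gs Ps))"
proof -
  define t where "t = theta_min m v Gs Ps"
  define L where "L = ln (1 / t)"
  define A where "A = ({cpd \<Theta> G i x j | \<Theta> G i x j. \<Theta> \<in> Ps \<and> G \<in> Gs \<and> i < m \<and> x \<in> configs m v \<and> j < v}
      \<union> {ref_table \<Theta> i j | \<Theta> i j. \<Theta> \<in> Ps \<and> i < m \<and> j < v})"
  have tA: "t = Inf A" unfolding t_def A_def theta_min_def by simp
  have t0: "t > 0" using assms(6) t_def by simp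
  have vp: "\<And>\<Theta>. \<Theta> \<in> Ps \<Longrightarrow> valid_param m v Gs \<Theta>" using assms(5) by auto
  have bdd: "bdd_below A"
    unfolding bdd_below_def A_def
    by (rule exI[of _ 0]) (auto dest!: vp simp: valid_param_def is_dist_def)
  have lowc: "t \<le> cpd \<Theta> G i x j" if "\<Theta> \<in> Ps" "G \<in> Gs" "i < m" "x \<in> configs m v" "j < v" for \<Theta> G i x j
    unfolding tA by (rule cInf_lower[OF _ bdd]) (use that in \<open>auto simp: A_def\<close>)
  have lowr: "t \<le> ref_table \<Theta> i j" if "\<Theta> \<in> Ps" "i < m" "j < v" for \<Theta> i j
    unfolding tA by (rule cInf_lower[OF _ bdd]) (use that in \<open>auto simp: A_def\<close>)
  have dc: "is_dist v (cpd \<Theta> G i x)" if "\<Theta> \<in> Ps" "G \<in> Gs" "i < m" "x \<in> configs m v" for \<Theta> G i x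
    using vp[OF that(1)] that unfolding valid_param_def by auto
  have dr: "is_dist v (ref_table \<Theta> i)" if "\<Theta> \<in> Ps" "i < m" for \<Theta> i
    using vp[OF that(1)] that unfolding valid_param_def by auto
  have vpos: "v > 0" if "m > 0"
  proof -
    obtain \<Theta> where "\<Theta> \<in> Ps" using assms(4) by auto
    from dr[OF this that] show ?thesis unfolding is_dist_def by (cases v) auto
  qed
  have L0: "L \<ge> 0" if "m > 0"
  proof -
    obtain \<Theta> where th: "\<Theta> \<in> Ps" using assms(4) by auto
    have d: "is_dist v (ref_table \<Theta> 0)" using dr[OF th that] .
    have "ref_table \<Theta> 0 0 \<le> 1"
      using d vpos[OF that] member_le_sum[of 0 "{..<v}" "ref_table \<Theta> 0"] unfolding is_dist_def by auto
    hence "t \<le> 1" using lowr[OF th that vpos[OF that]] by linarith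
    thus ?thesis unfolding L_def using t0 by simp
  qed
  have cfg: "x i < v" if "x \<in> configs m v" "i < m" for x i
    using that unfolding configs_def by auto
  have cnn: "0 \<le> cpd \<Theta> G i x j" if "\<Theta> \<in> Ps" "G \<in> Gs" "i < m" "x \<in> configs m v" "j < v" for \<Theta> G i x j
    using lowc[OF that] t0 by linarith
  have c1: "cpd \<Theta> G i x j \<le> 1" if "\<Theta> \<in> Ps" "G \<in> Gs" "i < m" "x \<in> configs m v" "j < v" for \<Theta> G i x j
    using dc[OF that(1-4)] that(5) member_le_sum[of j "{..<v}" "cpd \<Theta> G i x"] unfolding is_dist_def by auto
  have jnn: "0 \<le> joint m \<Theta> G x" if "\<Theta> \<in> Ps" "G \<in> Gs" "x \<in> configs m v" for \<Theta> G x
    unfolding joint_def by (rule prod_nonneg) (use that cnn cfg in auto)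
  have norm: "(\<Sum>x\<in>configs m v. joint m \<Theta> G x) = 1" if "\<Theta> \<in> Ps" "G \<in> Gs" for \<Theta> G
  proof (cases "m = 0")
    case True thus ?thesis by (simp add: configs_def joint_def)
  next
    case False
    show ?thesis
      by (rule joint_norm) (use that assms(3) vpos False dc in auto)
  qed
  have finc: "finite (configs m v)" unfolding configs_def by (rule finite_PiE) auto
  have part1: "exp_delta m v \<Theta> G i \<le> 4 * L" if i: "i < m" and G: "G \<in> Gs" and th: "\<Theta> \<in> Ps" for i G \<Theta>
  proof -
    have db: "delta v (cpd \<Theta> G i x) (ref_table \<Theta> i) \<le> 2 * L" if "x \<in> configs m v" for x
      unfolding L_def
      by (rule delta_bound[OF dc[OF th G i that] dr[OF th i] t0])
         (use lowc[OF th G i that] lowr[OF th i] in auto)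
    have "exp_delta m v \<Theta> G i \<le> (\<Sum>x\<in>configs m v. joint m \<Theta> G x * (2 * L))"
      unfolding exp_delta_def by (rule sum_mono, rule mult_left_mono) (use db jnn th G in auto)
    also have "\<dots> = 2 * L" using norm[OF th G] by (simp add: sum_distrib_right[symmetric])
    also have "\<dots> \<le> 4 * L" using L0 i by simp
    finally show ?thesis .
  qed
  have part2: "mutual_info m v n Gs \<Theta> \<le> 4 * real n * real m * L" if th: "\<Theta> \<in> Ps" for \<Theta>
  proof -
    define c where "c = real (card Gs)"
    have c0: "c > 0" unfolding c_def using assms(1,2) by (simp add: card_gt_0_iff)
    define K where "K = real n * real m * L"
    have jlow: "t ^ m \<le> joint m \<Theta> G x" if "G \<in> Gs" "x \<in> configs m v" for G x
    proof -
      have "(\<Prod>i<m. t) \<le> joint m \<Theta> G x" unfolding joint_def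
      proof (rule prod_mono)
        fix i assume "i \<in> {..<m}"
        hence "i < m" by simp
        thus "0 \<le> t \<and> t \<le> cpd \<Theta> G i x (x i)" using t0 lowc[OF th that(1) _ that(2) cfg[OF that(2)]] by auto
      qed
      thus ?thesis by simp
    qed
    have j1: "joint m \<Theta> G x \<le> 1" if "G \<in> Gs" "x \<in> configs m v" for G x
      unfolding joint_def
    proof (rule prod_le_1)
      fix i assume "i \<in> {..<m}"
      hence "i < m" by simp
      thus "0 \<le> cpd \<Theta> G i x (x i) \<and> cpd \<Theta> G i x (x i) \<le> 1"
        using cnn[OF th that(1) _ that(2) cfg[OF that(2)]] c1[OF th that(1) _ that(2) cfg[OF that(2)]] by auto
    qed
    have sc: "s k \<in> configs m v" if "s \<in> samples m v n" "k < n" for s k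
      using that unfolding samples_def by auto
    have splow: "(t ^ m) ^ n \<le> sample_prob m n \<Theta> G s" if "G \<in> Gs" "s \<in> samples m v n" for G s
    proof -
      have "(\<Prod>k<n. t ^ m) \<le> sample_prob m n \<Theta> G s" unfolding sample_prob_def
      proof (rule prod_mono)
        fix k assume "k \<in> {..<n}"
        hence "s k \<in> configs m v" using sc that by simp
        thus "0 \<le> t ^ m \<and> t ^ m \<le> joint m \<Theta> G (s k)" using t0 jlow[OF that(1)] by auto
      qed
      thus ?thesis by simp
    qed
    have sp1a: "sample_prob m n \<Theta> G s \<le> 1" if "G \<in> Gs" "s \<in> samples m v n" for G s
      unfolding sample_prob_def
    proof (rule prod_le_1)
      fix k assume "k \<in> {..<n}"
      hence "s k \<in> configs m v" using sc that by simp
      thus "0 \<le> joint m \<Theta> G (s k) \<and> joint m \<Theta> G (s k) \<le> 1" using jnn[OF th that(1)] j1[OF that(1)] by blast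
    qed
    have sp1b: "0 \<le> sample_prob m n \<Theta> G s" if "G \<in> Gs" "s \<in> samples m v n" for G s
      unfolding sample_prob_def
    proof (rule prod_nonneg)
      fix k assume "k \<in> {..<n}"
      hence "s k \<in> configs m v" using sc that by simp
      thus "0 \<le> joint m \<Theta> G (s k)" using jnn[OF th that(1)] by blast
    qed
    have spsum: "(\<Sum>s\<in>samples m v n. sample_prob m n \<Theta> G s) = 1" if G: "G \<in> Gs" for G
    proof -
      have "(\<Prod>k<n. \<Sum>x\<in>configs m v. joint m \<Theta> G x) = (\<Sum>s\<in>samples m v n. sample_prob m n \<Theta> G s)"
        unfolding samples_def sample_prob_def by (rule prod_sum_PiE) (use finc in auto)
      thus ?thesis using norm[OF th G] by simp
    qed
    have trm: "(let p = sample_prob m n \<Theta> G s;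
             q = (\<Sum>G'\<in>Gs. sample_prob m n \<Theta> G' s) / real (card Gs)
         in (1 / real (card Gs)) * (if p = 0 then 0 else p * ln (p / q)))
        \<le> (1 / c) * (sample_prob m n \<Theta> G s * K)" if G: "G \<in> Gs" and s: "s \<in> samples m v n" for G s
    proof -
      define p where "p = sample_prob m n \<Theta> G s"
      define q where "q = (\<Sum>G'\<in>Gs. sample_prob m n \<Theta> G' s) / c"
      have tp: "(t ^ m) ^ n > 0" using t0 by simp
      have "c * (t ^ m) ^ n \<le> (\<Sum>G'\<in>Gs. sample_prob m n \<Theta> G' s)"
      proof -
        have "(\<Sum>G'\<in>Gs. (t ^ m) ^ n) \<le> (\<Sum>G'\<in>Gs. sample_prob m n \<Theta> G' s)"
          by (rule sum_mono) (use splow s in auto)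
        thus ?thesis by (simp add: c_def)
      qed
      hence qlow: "(t ^ m) ^ n \<le> q" unfolding q_def using c0 by (simp add: field_simps)
      have "(if p = 0 then 0 else p * ln (p / q)) \<le> p * K"
      proof (cases "p = 0")
        case True thus ?thesis by simp
      next
        case False
        hence pp: "p > 0" using sp1b[OF G s] p_def by auto
        have qp: "q > 0" using qlow tp by linarith
        have "ln (p / q) = ln p - ln q" using pp qp by (simp add: ln_div)
        also have "\<dots> \<le> 0 - ln ((t ^ m) ^ n)"
          using sp1a[OF G s] p_def pp qp qlow tp by (intro diff_mono) auto
        also have "\<dots> = K" unfolding K_def L_def using t0
          by (simp add: ln_realpow ln_div algebra_simps)
        finally have "ln (p / q) \<le> K" .
        thus ?thesis using False pp by (simp add: mult_left_mono)
      qed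
      hence "(1 / c) * (if p = 0 then 0 else p * ln (p / q)) \<le> (1 / c) * (p * K)"
        by (rule mult_left_mono) (use c0 in simp)
      thus ?thesis unfolding Let_def by (simp only: p_def q_def c_def)
    qed
    have "mutual_info m v n Gs \<Theta> \<le> (\<Sum>G\<in>Gs. \<Sum>s\<in>samples m v n. (1 / c) * (sample_prob m n \<Theta> G s * K))"
      unfolding mutual_info_def by (intro sum_mono) (use trm in auto)
    also have "\<dots> = (\<Sum>G\<in>Gs. (1 / c) * K * (\<Sum>s\<in>samples m v n. sample_prob m n \<Theta> G s))"
      by (simp add: sum_distrib_left mult.commute)
    also have "\<dots> = (\<Sum>G\<in>Gs. (1 / c) * K)" using spsum by simp
    also have "\<dots> = K" using c0 by (simp add: c_def)
    also have "\<dots> \<le> 4 * K"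
    proof (cases "m = 0")
      case True thus ?thesis by (simp add: K_def)
    next
      case False thus ?thesis using L0 by (simp add: K_def)
    qed
    finally show ?thesis unfolding K_def by simp
  qed
  show ?thesis using part1 part2 unfolding L_def t_def by auto
qed

end
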